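(* Let $p\geq 1$ be an integer and define $\mathcal{G}_p:[-1,1]\times[-1,1]\to\mathbb{R}$ by $$\mathcal{G}_p(x,y)=\int_{-1}^1 \mathrm{ReLU}^p(z-x)\,\mathrm{ReLU}^p(z-y)\,dz .$$ Then, in the sense of distributions in $x$ (for fixed $y$), $$\frac{\partial^{2p+2}}{\partial x^{2p+2}}\mathcal{G}_p(x,y)=(-1)^{p-1}(p!)^2\,\delta(x-y),$$ where $\delta$ is the Dirac distribution.
   Context: $\mathrm{ReLU}^p(z)=(\max\{0,z\})^p$ for $z\in\mathbb{R}$. *)

theory Defs
  imports "HOL-Analysis.Analysis"
begin

definition ReLU_pow :: "nat \<Rightarrow> real \<Rightarrow> real" where
  "ReLU_pow p z = (max 0 z) ^ p"

definition G :: "nat \<Rightarrow> real \<Rightarrow> real \<Rightarrow> real" where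
  "G p x y = integral {-1..1} (\<lambda>z. ReLU_pow p (z - x) * ReLU_pow p (z - y))"

definition test_fun :: "(real \<Rightarrow> real) \<Rightarrow> bool" where
  "test_fun \<phi> \<longleftrightarrow> (\<forall>k x. ((deriv ^^ k) \<phi>) differentiable (at x)) \<and>
     (\<exists>a b. -1 < a \<and> b < 1 \<and> (\<forall>x. x \<notin> {a..b} \<longrightarrow> \<phi> x = 0))"

end

theory Submission
  imports Defs
begin

lemma ibp_left:
  fixes g :: "nat \<Rightarrow> real \<Rightarrow> real"
  assumes dg: "\<And>k x. (g k has_real_derivative g (Suc k) x) (at x)"
    and g0: "\<And>k. g k c = 0" and cz: "c \<le> z"
  shows "((\<lambda>x. (z - x)^p * g (Suc p) x) has_integral (fact p * g 0 z)) {c..z}"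
proof (induction p)
  case 0
  have "((\<lambda>x. g (Suc 0) x) has_integral (g 0 z - g 0 c)) {c..z}"
    using cz by (intro fundamental_theorem_of_calculus)
      (auto simp: has_real_derivative_iff_has_vector_derivative[symmetric]
        intro: has_field_derivative_at_within dg)
  then show ?case using g0 by simp
next
  case (Suc p)
  define F where "F x = (z - x)^(Suc p) * g (Suc p) x" for x
  define F' where "F' x = - (real (Suc p) * (z - x)^p) * g (Suc p) x + (z - x)^(Suc p) * g (Suc (Suc p)) x" for x
  have dF: "(F has_real_derivative F' x) (at x)" for x
  proof -
    have d1: "((\<lambda>x. (z - x)^(Suc p)) has_real_derivative - (real (Suc p) * (z - x)^p)) (at x)"
      by (auto intro!: derivative_eq_intros, cases p, auto simp: algebra_simps)
    show ?thesis unfolding F_def F'_def by (rule DERIV_cong[OF DERIV_mult[OF d1 dg]]) (simp add: algebra_simps)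
  qed
  have "(F' has_integral (F z - F c)) {c..z}"
    using cz dF
    by (intro fundamental_theorem_of_calculus)
      (auto simp: has_real_derivative_iff_has_vector_derivative[symmetric]
        intro: has_field_derivative_at_within)
  then have i1: "(F' has_integral 0) {c..z}" using g0 by (simp add: F_def)
  have i2: "((\<lambda>x. real (Suc p) * ((z - x)^p * g (Suc p) x)) has_integral (real (Suc p) * (fact p * g 0 z))) {c..z}"
    using Suc.IH by (rule has_integral_mult_right)
  have "((\<lambda>x. F' x + real (Suc p) * ((z - x)^p * g (Suc p) x)) has_integral (0 + real (Suc p) * (fact p * g 0 z))) {c..z}"
    by (rule has_integral_add[OF i1 i2])
  moreover have e: "0 + real (Suc p) * (fact p * g 0 z) = fact (Suc p) * g 0 z" by simp
  ultimately have "((\<lambda>x. F' x + real (Suc p) * ((z - x)^p * g (Suc p) x)) has_integral (fact (Suc p) * g 0 z)) {c..z}"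
    by (simp only: e)
  then show ?case
    by (rule has_integral_eq[rotated]) (auto simp: F'_def algebra_simps)
qed

lemma ibp_right:
  fixes g :: "nat \<Rightarrow> real \<Rightarrow> real"
  assumes dg: "\<And>k x. (g k has_real_derivative g (Suc k) x) (at x)"
    and g0: "\<And>k. g k d = 0" and yd: "y \<le> d"
  shows "((\<lambda>x. (x - y)^p * g (Suc p) x) has_integral ((-1)^(Suc p) * fact p * g 0 y)) {y..d}"
proof (induction p)
  case 0
  have "((\<lambda>x. g (Suc 0) x) has_integral (g 0 d - g 0 y)) {y..d}"
    using yd by (intro fundamental_theorem_of_calculus)
      (auto simp: has_real_derivative_iff_has_vector_derivative[symmetric]
        intro: has_field_derivative_at_within dg)
  then show ?case using g0 by simp
next
  case (Suc p)
  define F where "F x = (x - y)^(Suc p) * g (Suc p) x" for x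
  define F' where "F' x = (real (Suc p) * (x - y)^p) * g (Suc p) x + (x - y)^(Suc p) * g (Suc (Suc p)) x" for x
  have dF: "(F has_real_derivative F' x) (at x)" for x
  proof -
    have d1: "((\<lambda>x. (x - y)^(Suc p)) has_real_derivative (real (Suc p) * (x - y)^p)) (at x)"
      by (auto intro!: derivative_eq_intros, cases p, auto simp: algebra_simps)
    show ?thesis unfolding F_def F'_def by (rule DERIV_cong[OF DERIV_mult[OF d1 dg]]) (simp add: algebra_simps)
  qed
  have "(F' has_integral (F d - F y)) {y..d}"
    using yd dF
    by (intro fundamental_theorem_of_calculus)
      (auto simp: has_real_derivative_iff_has_vector_derivative[symmetric]
        intro: has_field_derivative_at_within)
  then have i1: "(F' has_integral 0) {y..d}" using g0 by (simp add: F_def)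
  have i2: "((\<lambda>x. real (Suc p) * ((x - y)^p * g (Suc p) x)) has_integral (real (Suc p) * ((-1)^(Suc p) * fact p * g 0 y))) {y..d}"
    using Suc.IH by (rule has_integral_mult_right)
  have "((\<lambda>x. F' x - real (Suc p) * ((x - y)^p * g (Suc p) x)) has_integral (0 - real (Suc p) * ((-1)^(Suc p) * fact p * g 0 y))) {y..d}"
    by (rule has_integral_diff[OF i1 i2])
  moreover have e: "0 - real (Suc p) * ((-1)^(Suc p) * fact p * g 0 y) = (-1)^(Suc (Suc p)) * fact (Suc p) * g 0 y" by simp
  ultimately have "((\<lambda>x. F' x - real (Suc p) * ((x - y)^p * g (Suc p) x)) has_integral ((-1)^(Suc (Suc p)) * fact (Suc p) * g 0 y)) {y..d}"
    by (simp only: e)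
  then show ?case
    by (rule has_integral_eq[rotated]) (auto simp: F'_def algebra_simps)
qed

theorem lemma1:
  fixes p :: nat and y :: real
  assumes "p \<ge> 1" and "y \<in> {-1..1}"
  shows "\<forall>\<phi>. test_fun \<phi> \<longrightarrow>
    integral {-1..1} (\<lambda>x. G p x y * (deriv ^^ (2*p+2)) \<phi> x)
      = (-1) ^ (p - 1) * (fact p)^2 * \<phi> y"
proof (intro allI impI)
  fix \<phi> :: "real \<Rightarrow> real"
  assume tf: "test_fun \<phi>"
  define D where "D k = (deriv ^^ k) \<phi>" for k
  have diff: "D k differentiable (at x)" for k x using tf by (simp add: test_fun_def D_def)
  have dD: "(D k has_real_derivative D (Suc k) x) (at x)" for k x
  proof -
    have "D (Suc k) = deriv (D k)" by (simp add: D_def)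
    then show ?thesis using diff[of k x] by (simp add: DERIV_deriv_iff_real_differentiable)
  qed
  have ctD: "isCont (D k) x" for k x by (rule DERIV_isCont[OF dD])
  obtain a b where ab: "-1 < a" "b < 1" "\<And>x. x \<notin> {a..b} \<Longrightarrow> \<phi> x = 0"
    using tf unfolding test_fun_def by blast
  have van: "x < a \<or> x > b \<Longrightarrow> D k x = 0" for k x
  proof (induction k arbitrary: x)
    case 0 then show ?case using ab(3)[of x] by (auto simp: D_def)
  next
    case (Suc k)
    let ?S = "{..<a} \<union> {b<..}"
    have "open ?S" by auto
    moreover have "x \<in> ?S" using Suc.prems by auto
    moreover have "\<And>w. w \<in> ?S \<Longrightarrow> D k w = 0" using Suc.IH by auto
    ultimately have "((\<lambda>_. 0) has_field_derivative D (Suc k) x) (at x)"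
      by (intro has_field_derivative_transform_within_open[OF dD[of k x], of ?S]) auto
    moreover have "((\<lambda>_. 0) has_field_derivative 0) (at x)" by simp
    ultimately show ?case using DERIV_unique by blast
  qed
  have vm: "D k (-1) = 0" "D k 1 = 0" for k using van ab by auto
  define R where "R t = ReLU_pow p t" for t
  have R0: "t \<le> 0 \<Longrightarrow> R t = 0" for t using assms(1) by (simp add: R_def ReLU_pow_def max_def)
  have R1: "t \<ge> 0 \<Longrightarrow> R t = t ^ p" for t by (simp add: R_def ReLU_pow_def max_def)
  have ctR: "isCont R t" for t unfolding R_def ReLU_pow_def by (intro continuous_intros)
  define \<psi> where "\<psi> = D (2*p+2)"
  have inner: "integral {-1..1} (\<lambda>x. R (z - x) * \<psi> x) = fact p * D (Suc p) z"
    if z: "z \<in> {-1..1}" for z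
  proof -
    have "((\<lambda>x. (z - x)^p * D (Suc p + Suc p) x) has_integral (fact p * D (0 + Suc p) z)) {-1..z}"
      using ibp_left[where g="\<lambda>k. D (k + Suc p)" and c="-1" and z=z and p=p] dD vm z by auto
    then have "((\<lambda>x. (z - x)^p * \<psi> x) has_integral (fact p * D (Suc p) z)) {-1..z}"
      by (simp add: \<psi>_def mult_2)
    then have i1: "((\<lambda>x. R (z - x) * \<psi> x) has_integral (fact p * D (Suc p) z)) {-1..z}"
      by (rule has_integral_eq[rotated]) (auto simp: R1)
    have i2: "((\<lambda>x. R (z - x) * \<psi> x) has_integral 0) {z..1}"
      by (rule has_integral_eq[rotated, OF has_integral_0]) (auto simp: R0)
    have "((\<lambda>x. R (z - x) * \<psi> x) has_integral (fact p * D (Suc p) z + 0)) {-1..1}"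
      using has_integral_combine[OF _ _ i1 i2] z by auto
    then show ?thesis by (simp add: integral_unique)
  qed
  have outer: "integral {-1..1} (\<lambda>z. R (z - y) * (fact p * D (Suc p) z)) = fact p * ((-1)^(Suc p) * fact p * \<phi> y)"
  proof -
    have ir: "((\<lambda>z. (z - y)^p * D (Suc p) z) has_integral ((-1)^(Suc p) * fact p * D 0 y)) {y..1}"
      using ibp_right[where g=D and d=1 and y=y and p=p] dD vm assms(2) by auto
    have "((\<lambda>z. fact p * ((z - y)^p * D (Suc p) z)) has_integral (fact p * ((-1)^(Suc p) * fact p * \<phi> y))) {y..1}"
    proof -
      have "D 0 y = \<phi> y" by (simp add: D_def)
      then show ?thesis using has_integral_mult_right[OF ir, of "fact p"] by simp
    qed
    then have i1: "((\<lambda>z. R (z - y) * (fact p * D (Suc p) z)) has_integral (fact p * ((-1)^(Suc p) * fact p * \<phi> y))) {y..1}"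
      by (rule has_integral_eq[rotated]) (auto simp: R1)
    have i2: "((\<lambda>z. R (z - y) * (fact p * D (Suc p) z)) has_integral 0) {-1..y}"
      by (rule has_integral_eq[rotated, OF has_integral_0]) (auto simp: R0)
    have "((\<lambda>z. R (z - y) * (fact p * D (Suc p) z)) has_integral (0 + fact p * ((-1)^(Suc p) * fact p * \<phi> y))) {-1..1}"
      using has_integral_combine[OF _ _ i2 i1] assms(2) by auto
    then show ?thesis by (simp add: integral_unique)
  qed
  have cont: "continuous_on (cbox (-1,-1) (1,1)) (\<lambda>(x,z). R (z - x) * R (z - y) * \<psi> x)"
  proof (rule continuous_at_imp_continuous_on, rule ballI)
    fix w :: "real \<times> real"
    have c1: "isCont (\<lambda>w. R (snd w - fst w)) w"
      by (rule isCont_o2[where g=R, OF _ ctR]) (intro continuous_intros)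
    have c2: "isCont (\<lambda>w. R (snd w - y)) w"
      by (rule isCont_o2[where g=R, OF _ ctR]) (intro continuous_intros)
    have c3: "isCont (\<lambda>w. \<psi> (fst w)) w"
      by (rule isCont_o2[where g=\<psi>]) (auto intro: continuous_intros simp: \<psi>_def ctD)
    have "isCont (\<lambda>w. R (snd w - fst w) * R (snd w - y) * \<psi> (fst w)) w"
      using c1 c2 c3 by (intro continuous_intros)
    then show "isCont (\<lambda>(x,z). R (z - x) * R (z - y) * \<psi> x) w"
      by (simp add: case_prod_beta')
  qed
  have "integral {-1..1} (\<lambda>x. G p x y * (deriv ^^ (2*p+2)) \<phi> x)
      = integral {-1..1} (\<lambda>x. integral {-1..1} (\<lambda>z. R (z - x) * R (z - y) * \<psi> x))"
    by (simp add: G_def R_def \<psi>_def D_def)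
  also have "\<dots> = integral {-1..1} (\<lambda>z. integral {-1..1} (\<lambda>x. R (z - x) * R (z - y) * \<psi> x))"
    using integral_swap_continuous[OF cont] by (simp add: cbox_interval)
  also have "\<dots> = integral {-1..1} (\<lambda>z. R (z - y) * integral {-1..1} (\<lambda>x. R (z - x) * \<psi> x))"
  proof (rule integral_cong)
    fix z
    have "(\<lambda>x. R (z - x) * R (z - y) * \<psi> x) = (\<lambda>x. R (z - y) * (R (z - x) * \<psi> x))"
      by (simp add: fun_eq_iff ac_simps)
    then show "integral {-1..1} (\<lambda>x. R (z - x) * R (z - y) * \<psi> x) = R (z - y) * integral {-1..1} (\<lambda>x. R (z - x) * \<psi> x)"
      by (simp only: integral_mult_right)
  qed
  also have "\<dots> = integral {-1..1} (\<lambda>z. R (z - y) * (fact p * D (Suc p) z))"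
    by (rule integral_cong) (simp add: inner)
  also have "\<dots> = fact p * ((-1)^(Suc p) * fact p * \<phi> y)" by (rule outer)
  also have "\<dots> = (-1) ^ (p - 1) * (fact p)^2 * \<phi> y"
  proof -
    obtain q where q: "p = Suc q" using assms(1) by (cases p) auto
    show ?thesis by (simp add: q power2_eq_square)
  qed
  finally show "integral {-1..1} (\<lambda>x. G p x y * (deriv ^^ (2*p+2)) \<phi> x)
      = (-1) ^ (p - 1) * (fact p)^2 * \<phi> y" .
qed

end
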